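(* Let $A$ and $C$ be abelian groups and let $H$ be a central extension of $A$ by $C$ (written multiplicatively), with commutator pairing $\{a,b\}:=\tilde a\tilde b\tilde a^{-1}\tilde b^{-1}\in C$ for lifts $\tilde a,\tilde b\in H$ of $a,b\in A$. Let $H^{(2)}$ be the Baer square of $H$, and $h\mapsto h^{(2)}$ the canonical homomorphism $H\to H^{(2)}$ lifting $\mathrm{id}_A$ (so $c^{(2)}=c^2$ for $c\in C$). For a symmetric structure $\sigma$ on $H$ define the set-theoretic section $s_\sigma:A\to H^{(2)}$ by $s_\sigma(a):=[\tilde a\,\sigma(\tilde a)]^{-1}\,\tilde a^{(2)}$, where $\tilde a\in H$ is any lift of $a$ and $[\tilde a\,\sigma(\tilde a)]\in C$ (equivalently, $s_\sigma(a)$ is the trivialization of the $C$-torsor $H^{(2)}_a=H_a\cdot H_a$ given by $h\cdot h'\mapsto h\sigma(h')=\sigma(h)h'\in C$). Then $\sigma\mapsto s_\sigma$ is a bijection between the set of symmetric structures on $H$ and the set of set-theoretic sections $s:A\to H^{(2)}$ of the projection $H^{(2)}\to A$ satisfying $s(a)s(b)=s(ab)\{a,b\}$ for all $a,b\in A$.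
   Context: A symmetric structure on the central $C$-extension $H$ of $A$ is an automorphism $\sigma$ of the group $H$ such that $\sigma^2=\mathrm{id}_H$, $\sigma|_C=\mathrm{id}_C$, and $\sigma$ induces on $A=H/C$ the involution $a\mapsto a^{-1}$. For $a\in A$, $H_a\subset H$ denotes the preimage of $a$ (a $C$-torsor). The Baer square $H^{(2)}$ is the quotient of $H\times_A H$ by the subgroup $\{(c,c^{-1}):c\in C\}$; it is a central $C$-extension of $A$ with $C$ embedded via $c\mapsto (c,1)$, and $h^{(2)}$ is the class of $(h,h)$. *)

theory Defs
  imports "HOL-Algebra.Algebra"
begin

definition central_ext ::
  "('a, 'x) monoid_scheme \<Rightarrow> ('c, 'y) monoid_scheme \<Rightarrow> ('h, 'z) monoid_scheme
   \<Rightarrow> ('c \<Rightarrow> 'h) \<Rightarrow> ('h \<Rightarrow> 'a) \<Rightarrow> bool" where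
  "central_ext A C H i p \<longleftrightarrow>
     comm_group A \<and> comm_group C \<and> group H \<and>
     i \<in> hom C H \<and> inj_on i (carrier C) \<and>
     p \<in> hom H A \<and> p ` carrier H = carrier A \<and>
     kernel H A p = i ` carrier C \<and>
     (\<forall>c\<in>carrier C. \<forall>h\<in>carrier H. i c \<otimes>\<^bsub>H\<^esub> h = h \<otimes>\<^bsub>H\<^esub> i c)"

definition fib_prod :: "('h, 'z) monoid_scheme \<Rightarrow> ('h \<Rightarrow> 'a) \<Rightarrow> ('h \<times> 'h) monoid" where
  "fib_prod H p = (H \<times>\<times> H)\<lparr>carrier :=
      {(h, h'). h \<in> carrier H \<and> h' \<in> carrier H \<and> p h = p h'}\<rparr>"

definition baer_N :: "('c, 'y) monoid_scheme \<Rightarrow> ('h, 'z) monoid_scheme \<Rightarrow> ('c \<Rightarrow> 'h)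
   \<Rightarrow> ('h \<times> 'h) set" where
  "baer_N C H i = (\<lambda>c. (i c, inv\<^bsub>H\<^esub> (i c))) ` carrier C"

definition baer_sq :: "('c, 'y) monoid_scheme \<Rightarrow> ('h, 'z) monoid_scheme \<Rightarrow> ('c \<Rightarrow> 'h)
   \<Rightarrow> ('h \<Rightarrow> 'a) \<Rightarrow> ('h \<times> 'h) set monoid" where
  "baer_sq C H i p = fib_prod H p Mod baer_N C H i"

definition baer_cls :: "('c, 'y) monoid_scheme \<Rightarrow> ('h, 'z) monoid_scheme \<Rightarrow> ('c \<Rightarrow> 'h)
   \<Rightarrow> ('h \<Rightarrow> 'a) \<Rightarrow> 'h \<Rightarrow> 'h \<Rightarrow> ('h \<times> 'h) set" where
  "baer_cls C H i p h h' = baer_N C H i #>\<^bsub>fib_prod H p\<^esub> (h, h')"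

definition baer_map where
  "baer_map C H i p h = baer_cls C H i p h h"

definition baer_emb where
  "baer_emb C H i p c = baer_cls C H i p (i c) \<one>\<^bsub>H\<^esub>"

definition baer_proj :: "('h \<Rightarrow> 'a) \<Rightarrow> ('h \<times> 'h) set \<Rightarrow> 'a" where
  "baer_proj p S = p (fst (SOME z. z \<in> S))"

definition lift :: "('h, 'z) monoid_scheme \<Rightarrow> ('h \<Rightarrow> 'a) \<Rightarrow> 'a \<Rightarrow> 'h" where
  "lift H p a = (SOME h. h \<in> carrier H \<and> p h = a)"

definition cpre :: "('c, 'y) monoid_scheme \<Rightarrow> ('c \<Rightarrow> 'h) \<Rightarrow> 'h \<Rightarrow> 'c" where
  "cpre C i h = (THE c. c \<in> carrier C \<and> i c = h)"

definition comm_pair where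
  "comm_pair C H i p a b =
     cpre C i (lift H p a \<otimes>\<^bsub>H\<^esub> lift H p b \<otimes>\<^bsub>H\<^esub>
               inv\<^bsub>H\<^esub> (lift H p a) \<otimes>\<^bsub>H\<^esub> inv\<^bsub>H\<^esub> (lift H p b))"

definition sym_struct ::
  "('a, 'x) monoid_scheme \<Rightarrow> ('c, 'y) monoid_scheme \<Rightarrow> ('h, 'z) monoid_scheme
   \<Rightarrow> ('c \<Rightarrow> 'h) \<Rightarrow> ('h \<Rightarrow> 'a) \<Rightarrow> ('h \<Rightarrow> 'h) \<Rightarrow> bool" where
  "sym_struct A C H i p \<sigma> \<longleftrightarrow>
     \<sigma> \<in> hom H H \<and> bij_betw \<sigma> (carrier H) (carrier H) \<and> \<sigma> \<in> extensional (carrier H) \<and>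
     (\<forall>h\<in>carrier H. \<sigma> (\<sigma> h) = h) \<and>
     (\<forall>c\<in>carrier C. \<sigma> (i c) = i c) \<and>
     (\<forall>h\<in>carrier H. p (\<sigma> h) = inv\<^bsub>A\<^esub> (p h))"

definition sec_of_sym where
  "sec_of_sym A C H i p \<sigma> =
     (\<lambda>a\<in>carrier A.
        baer_emb C H i p (inv\<^bsub>C\<^esub> (cpre C i (lift H p a \<otimes>\<^bsub>H\<^esub> \<sigma> (lift H p a))))
        \<otimes>\<^bsub>baer_sq C H i p\<^esub> baer_map C H i p (lift H p a))"

definition good_section where
  "good_section A C H i p s \<longleftrightarrow>
     s \<in> extensional (carrier A) \<and>
     (\<forall>a\<in>carrier A. s a \<in> carrier (baer_sq C H i p) \<and> baer_proj p (s a) = a) \<and>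
     (\<forall>a\<in>carrier A. \<forall>b\<in>carrier A.
        s a \<otimes>\<^bsub>baer_sq C H i p\<^esub> s b =
        s (a \<otimes>\<^bsub>A\<^esub> b) \<otimes>\<^bsub>baer_sq C H i p\<^esub> baer_emb C H i p (comm_pair C H i p a b))"

end

theory Submission
  imports Defs
begin

locale cext =
  fixes A :: "('a, 'x) monoid_scheme" and C :: "('c, 'y) monoid_scheme"
    and H :: "('h, 'z) monoid_scheme" and i :: "'c \<Rightarrow> 'h" and p :: "'h \<Rightarrow> 'a"
  assumes ce: "central_ext A C H i p"
begin

sublocale A: comm_group A using ce unfolding central_ext_def by auto
sublocale C: comm_group C using ce unfolding central_ext_def by auto
sublocale H: group H using ce unfolding central_ext_def by auto
sublocale iH: group_hom C H i using ce unfolding central_ext_def group_hom_def group_hom_axioms_def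
  by auto
sublocale pH: group_hom H A p using ce unfolding central_ext_def group_hom_def group_hom_axioms_def
  by auto

lemma central: "c \<in> carrier C \<Longrightarrow> h \<in> carrier H \<Longrightarrow> i c \<otimes>\<^bsub>H\<^esub> h = h \<otimes>\<^bsub>H\<^esub> i c"
  using ce unfolding central_ext_def by auto

lemma central_inv: "c \<in> carrier C \<Longrightarrow> h \<in> carrier H \<Longrightarrow>
  inv\<^bsub>H\<^esub> (i c) \<otimes>\<^bsub>H\<^esub> h = h \<otimes>\<^bsub>H\<^esub> inv\<^bsub>H\<^esub> (i c)"
  using central[of "inv\<^bsub>C\<^esub> c" h] by simp

lemma inj_i: "inj_on i (carrier C)"
  using ce unfolding central_ext_def by auto

lemma p_surj: "p ` carrier H = carrier A"
  using ce unfolding central_ext_def by auto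

lemma ker: "h \<in> carrier H \<Longrightarrow> p h = \<one>\<^bsub>A\<^esub> \<Longrightarrow> \<exists>c\<in>carrier C. h = i c"
  using ce unfolding central_ext_def kernel_def by (auto simp: set_eq_iff)

lemma p_i: "c \<in> carrier C \<Longrightarrow> p (i c) = \<one>\<^bsub>A\<^esub>"
proof -
  assume "c \<in> carrier C"
  then have "i c \<in> kernel H A p" using ce unfolding central_ext_def by auto
  then show ?thesis by (simp add: kernel_def)
qed

lemma samefib:
  assumes "x \<in> carrier H" "y \<in> carrier H" "p x = p y"
  shows "\<exists>c\<in>carrier C. y = i c \<otimes>\<^bsub>H\<^esub> x"
proof -
  have "p (y \<otimes>\<^bsub>H\<^esub> inv\<^bsub>H\<^esub> x) = \<one>\<^bsub>A\<^esub>" using assms by simp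
  then obtain c where c: "c \<in> carrier C" "y \<otimes>\<^bsub>H\<^esub> inv\<^bsub>H\<^esub> x = i c"
    using ker assms by (metis H.inv_closed H.m_closed)
  then have "y = i c \<otimes>\<^bsub>H\<^esub> x" using assms
    by (metis H.inv_solve_right iH.hom_closed)
  then show ?thesis using c by blast
qed

lemma cpre_i: "c \<in> carrier C \<Longrightarrow> cpre C i (i c) = c"
  unfolding cpre_def using inj_i by (auto intro!: the_equality dest: inj_onD)

lemma lift: "a \<in> carrier A \<Longrightarrow> lift H p a \<in> carrier H \<and> p (lift H p a) = a"
proof -
  assume a: "a \<in> carrier A"
  then obtain h where "h \<in> carrier H" "p h = a" using p_surj by (metis imageE)
  then show ?thesis unfolding lift_def using someI[of "\<lambda>x. x \<in> carrier H \<and> p x = a" h] by simp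
qed

abbreviation "F \<equiv> fib_prod H p"
abbreviation "N \<equiv> baer_N C H i"
abbreviation "cls \<equiv> baer_cls C H i p"
abbreviation "B \<equiv> baer_sq C H i p"

lemma F_carrier [simp]: "carrier F = {(h, h'). h \<in> carrier H \<and> h' \<in> carrier H \<and> p h = p h'}"
  by (simp add: fib_prod_def)

lemma F_mult [simp]: "(x, y) \<otimes>\<^bsub>F\<^esub> (x', y') = (x \<otimes>\<^bsub>H\<^esub> x', y \<otimes>\<^bsub>H\<^esub> y')"
  by (simp add: fib_prod_def DirProd_def)

lemma F_one [simp]: "\<one>\<^bsub>F\<^esub> = (\<one>\<^bsub>H\<^esub>, \<one>\<^bsub>H\<^esub>)"
  by (simp add: fib_prod_def DirProd_def)

lemma F_sub: "subgroup {(h, h'). h \<in> carrier H \<and> h' \<in> carrier H \<and> p h = p h'} (H \<times>\<times> H)"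
proof -
  interpret HH: group "H \<times>\<times> H" by (rule DirProd_group) (rule H.is_group)+
  show ?thesis
  proof (rule HH.subgroupI)
    fix a assume "a \<in> {(h, h'). h \<in> carrier H \<and> h' \<in> carrier H \<and> p h = p h'}"
    then show "inv\<^bsub>H \<times>\<times> H\<^esub> a \<in> {(h, h'). h \<in> carrier H \<and> h' \<in> carrier H \<and> p h = p h'}"
      by (auto simp: inv_DirProd[OF H.is_group H.is_group])
  qed (auto simp: DirProd_def)
qed

lemma F_group: "group F"
  unfolding fib_prod_def by (rule subgroup.subgroup_is_group[OF F_sub DirProd_group]) (rule H.is_group)+

sublocale F: group F by (rule F_group)

lemma F_inv [simp]: "x \<in> carrier H \<Longrightarrow> y \<in> carrier H \<Longrightarrow> p x = p y \<Longrightarrow>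
   inv\<^bsub>F\<^esub> (x, y) = (inv\<^bsub>H\<^esub> x, inv\<^bsub>H\<^esub> y)"
  by (rule F.inv_equality) auto

lemma N_def': "N = (\<lambda>c. (i c, inv\<^bsub>H\<^esub> (i c))) ` carrier C"
  by (simp add: baer_N_def)

lemma N_sub: "subgroup N F"
proof (rule F.subgroupI)
  show "N \<subseteq> carrier F" by (auto simp: N_def' p_i)
  show "N \<noteq> {}" by (auto simp: N_def')
next
  fix a assume "a \<in> N"
  then obtain c where c: "c \<in> carrier C" "a = (i c, inv\<^bsub>H\<^esub> (i c))" by (auto simp: N_def')
  then have "inv\<^bsub>F\<^esub> a = (i (inv\<^bsub>C\<^esub> c), inv\<^bsub>H\<^esub> (i (inv\<^bsub>C\<^esub> c)))"
    by (simp add: p_i)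
  then show "inv\<^bsub>F\<^esub> a \<in> N" using c unfolding N_def'
    by (intro image_eqI[where x="inv\<^bsub>C\<^esub> c"]) auto
next
  fix a b assume "a \<in> N" "b \<in> N"
  then obtain c d where c: "c \<in> carrier C" "a = (i c, inv\<^bsub>H\<^esub> (i c))"
    and d: "d \<in> carrier C" "b = (i d, inv\<^bsub>H\<^esub> (i d))" by (auto simp: N_def')
  then have "a \<otimes>\<^bsub>F\<^esub> b = (i (c \<otimes>\<^bsub>C\<^esub> d), inv\<^bsub>H\<^esub> (i (c \<otimes>\<^bsub>C\<^esub> d)))"
    using central_inv[of c "inv\<^bsub>H\<^esub> (i d)"] by (simp add: H.inv_mult_group)
  then show "a \<otimes>\<^bsub>F\<^esub> b \<in> N" using c d unfolding N_def'
    by (intro image_eqI[where x="c \<otimes>\<^bsub>C\<^esub> d"]) auto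
qed

lemma N_normal: "N \<lhd> F"
proof (rule F.normal_invI[OF N_sub])
  fix x h assume x: "x \<in> carrier F" and h: "h \<in> N"
  then obtain c where c: "c \<in> carrier C" "h = (i c, inv\<^bsub>H\<^esub> (i c))" by (auto simp: N_def')
  obtain u v where uv: "x = (u, v)" "u \<in> carrier H" "v \<in> carrier H" "p u = p v" using x by auto
  have "x \<otimes>\<^bsub>F\<^esub> h \<otimes>\<^bsub>F\<^esub> inv\<^bsub>F\<^esub> x = h"
  proof -
    have "x \<otimes>\<^bsub>F\<^esub> h = h \<otimes>\<^bsub>F\<^esub> x"
      using uv c central[of c u] central_inv[of c v] by simp
    then show ?thesis using x h N_sub
      by (metis F.inv_solve_right F.m_closed F.inv_closed subgroup.mem_carrier)
  qed
  then show "x \<otimes>\<^bsub>F\<^esub> h \<otimes>\<^bsub>F\<^esub> inv\<^bsub>F\<^esub> x \<in> N" using h by simp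
qed

sublocale NF: normal N F by (rule N_normal)

lemma B_def': "B = F Mod N" by (simp add: baer_sq_def)

sublocale B: group B unfolding B_def' by (rule NF.factorgroup_is_group)

lemma cls_def': "cls x y = N #>\<^bsub>F\<^esub> (x, y)" by (simp add: baer_cls_def)

lemma N_subset: "N \<subseteq> carrier F" using N_sub subgroup.subset by blast

lemma cls_eq:
  assumes "x \<in> carrier H" "y \<in> carrier H" "p x = p y" "c \<in> carrier C"
  shows "cls (i c \<otimes>\<^bsub>H\<^esub> x) (inv\<^bsub>H\<^esub> (i c) \<otimes>\<^bsub>H\<^esub> y) = cls x y"
proof -
  have e: "(i c \<otimes>\<^bsub>H\<^esub> x, inv\<^bsub>H\<^esub> (i c) \<otimes>\<^bsub>H\<^esub> y) = (i c, inv\<^bsub>H\<^esub> (i c)) \<otimes>\<^bsub>F\<^esub> (x, y)" by simp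
  have n: "(i c, inv\<^bsub>H\<^esub> (i c)) \<in> N" using assms by (auto simp: N_def')
  have "(i c \<otimes>\<^bsub>H\<^esub> x, inv\<^bsub>H\<^esub> (i c) \<otimes>\<^bsub>H\<^esub> y) \<in> N #>\<^bsub>F\<^esub> (x, y)"
    unfolding e using assms n by (intro F.rcosI N_subset) auto
  then have "N #>\<^bsub>F\<^esub> (x, y) = N #>\<^bsub>F\<^esub> (i c \<otimes>\<^bsub>H\<^esub> x, inv\<^bsub>H\<^esub> (i c) \<otimes>\<^bsub>H\<^esub> y)"
    using assms by (intro F.repr_independence N_sub) auto
  then show ?thesis by (simp add: cls_def')
qed

lemma cls_uniq:
  assumes "x \<in> carrier H" "x' \<in> carrier H" "h \<in> carrier H" "p x = p h" "p x' = p h"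
    and "cls x h = cls x' h"
  shows "x = x'"
proof -
  have "(x, h) \<in> N #>\<^bsub>F\<^esub> (x, h)" using assms by (intro F.rcos_self N_sub) auto
  then have "(x, h) \<in> N #>\<^bsub>F\<^esub> (x', h)" using assms(6) by (simp add: cls_def')
  then obtain c where c: "c \<in> carrier C" "(x, h) = (i c, inv\<^bsub>H\<^esub> (i c)) \<otimes>\<^bsub>F\<^esub> (x', h)"
    unfolding r_coset_def N_def' by auto
  then have "inv\<^bsub>H\<^esub> (i c) \<otimes>\<^bsub>H\<^esub> h = h" "x = i c \<otimes>\<^bsub>H\<^esub> x'" by auto
  then show ?thesis using c assms by (simp add: H.inv_eq_1_iff)
qed

lemma cls_mult:
  assumes "x \<in> carrier H" "y \<in> carrier H" "p x = p y"
    "x' \<in> carrier H" "y' \<in> carrier H" "p x' = p y'"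
  shows "cls x y \<otimes>\<^bsub>B\<^esub> cls x' y' = cls (x \<otimes>\<^bsub>H\<^esub> x') (y \<otimes>\<^bsub>H\<^esub> y')"
  unfolding B_def' cls_def' FactGroup_def using assms by (simp add: NF.rcos_sum)

lemma cls_carrier:
  assumes "x \<in> carrier H" "y \<in> carrier H" "p x = p y"
  shows "cls x y \<in> carrier B"
  unfolding B_def' cls_def' FactGroup_def using assms by (simp, intro F.rcosetsI N_subset) auto

lemma B_carrierE:
  assumes "S \<in> carrier B"
  obtains x y where "x \<in> carrier H" "y \<in> carrier H" "p x = p y" "S = cls x y"
  using assms unfolding B_def' cls_def' FactGroup_def RCOSETS_def by auto

lemma B_one: "\<one>\<^bsub>B\<^esub> = cls \<one>\<^bsub>H\<^esub> \<one>\<^bsub>H\<^esub>"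
  unfolding B_def' cls_def' FactGroup_def using N_subset by (simp flip: F_one)

lemma cls_proj:
  assumes "x \<in> carrier H" "y \<in> carrier H" "p x = p y"
  shows "baer_proj p (cls x y) = p x"
proof -
  have ne: "(x, y) \<in> N #>\<^bsub>F\<^esub> (x, y)" using assms by (intro F.rcos_self N_sub) auto
  have all: "p (fst z) = p x" if zin: "z \<in> N #>\<^bsub>F\<^esub> (x, y)" for z
  proof -
    obtain c where "c \<in> carrier C" "z = (i c \<otimes>\<^bsub>H\<^esub> x, inv\<^bsub>H\<^esub> (i c) \<otimes>\<^bsub>H\<^esub> y)"
    proof -
      from zin obtain n where n: "n \<in> N" "z = n \<otimes>\<^bsub>F\<^esub> (x, y)"
        unfolding r_coset_def by blast
      from n(1) obtain c where c: "c \<in> carrier C" "n = (i c, inv\<^bsub>H\<^esub> (i c))"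
        unfolding N_def' by blast
      show ?thesis using n(2) c by (intro that[of c]) simp_all
    qed
    then show ?thesis using assms by (simp add: p_i)
  qed
  show ?thesis unfolding baer_proj_def cls_def'
    by (rule someI2[of "\<lambda>z. z \<in> N #>\<^bsub>F\<^esub> (x, y)", OF ne]) (rule all)
qed

lemma cls_swap:
  assumes "x \<in> carrier H" "y \<in> carrier H" "p x = p y"
  shows "cls x y = cls y x"
proof -
  obtain c where c: "c \<in> carrier C" "y = i c \<otimes>\<^bsub>H\<^esub> x" using samefib assms by blast
  have "cls (i c \<otimes>\<^bsub>H\<^esub> x) (inv\<^bsub>H\<^esub> (i c) \<otimes>\<^bsub>H\<^esub> y) = cls x y"
    using assms c by (intro cls_eq) auto
  moreover have "inv\<^bsub>H\<^esub> (i c) \<otimes>\<^bsub>H\<^esub> y = x" using c assms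
    by (simp add: H.m_assoc[symmetric])
  ultimately show ?thesis using c by simp
qed

lemma emb_map:
  assumes "c \<in> carrier C" "h \<in> carrier H"
  shows "baer_emb C H i p c \<otimes>\<^bsub>B\<^esub> baer_map C H i p h = cls (i c \<otimes>\<^bsub>H\<^esub> h) h"
  unfolding baer_emb_def baer_map_def using assms by (subst cls_mult) (auto simp: p_i)

lemma comm_basic:
  assumes "x \<in> carrier H" "y \<in> carrier H"
  shows "\<exists>e\<in>carrier C. i e = x \<otimes>\<^bsub>H\<^esub> y \<otimes>\<^bsub>H\<^esub> inv\<^bsub>H\<^esub> x \<otimes>\<^bsub>H\<^esub> inv\<^bsub>H\<^esub> y"
proof -
  have "p (x \<otimes>\<^bsub>H\<^esub> y \<otimes>\<^bsub>H\<^esub> inv\<^bsub>H\<^esub> x \<otimes>\<^bsub>H\<^esub> inv\<^bsub>H\<^esub> y)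
     = p y \<otimes>\<^bsub>A\<^esub> p x \<otimes>\<^bsub>A\<^esub> inv\<^bsub>A\<^esub> p x \<otimes>\<^bsub>A\<^esub> inv\<^bsub>A\<^esub> p y"
    using assms by (simp add: A.m_comm[of "p x" "p y"])
  also have "\<dots> = \<one>\<^bsub>A\<^esub>" using assms by (simp add: A.m_assoc)
  finally show ?thesis using ker assms by (metis H.inv_closed H.m_closed)
qed

lemma comm_cancel:
  assumes "x \<in> carrier H" "y \<in> carrier H"
  shows "(x \<otimes>\<^bsub>H\<^esub> y \<otimes>\<^bsub>H\<^esub> inv\<^bsub>H\<^esub> x \<otimes>\<^bsub>H\<^esub> inv\<^bsub>H\<^esub> y) \<otimes>\<^bsub>H\<^esub> (y \<otimes>\<^bsub>H\<^esub> x) = x \<otimes>\<^bsub>H\<^esub> y"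
proof -
  have "inv\<^bsub>H\<^esub> y \<otimes>\<^bsub>H\<^esub> (y \<otimes>\<^bsub>H\<^esub> x) = x" using assms by (simp add: H.m_assoc[symmetric])
  then show ?thesis using assms by (simp add: H.m_assoc)
qed

lemma central_move:
  assumes "c \<in> carrier C" "d \<in> carrier C" "x \<in> carrier H" "y \<in> carrier H"
  shows "(i c \<otimes>\<^bsub>H\<^esub> x) \<otimes>\<^bsub>H\<^esub> (i d \<otimes>\<^bsub>H\<^esub> y) = x \<otimes>\<^bsub>H\<^esub> y \<otimes>\<^bsub>H\<^esub> i (c \<otimes>\<^bsub>C\<^esub> d)"
proof -
  have "(i c \<otimes>\<^bsub>H\<^esub> x) \<otimes>\<^bsub>H\<^esub> (i d \<otimes>\<^bsub>H\<^esub> y) = (x \<otimes>\<^bsub>H\<^esub> i c) \<otimes>\<^bsub>H\<^esub> (y \<otimes>\<^bsub>H\<^esub> i d)"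
    using assms central by simp
  also have "\<dots> = x \<otimes>\<^bsub>H\<^esub> ((i c \<otimes>\<^bsub>H\<^esub> y) \<otimes>\<^bsub>H\<^esub> i d)"
    using assms by (simp add: H.m_assoc)
  also have "\<dots> = x \<otimes>\<^bsub>H\<^esub> ((y \<otimes>\<^bsub>H\<^esub> i c) \<otimes>\<^bsub>H\<^esub> i d)"
    using assms central by simp
  also have "\<dots> = x \<otimes>\<^bsub>H\<^esub> y \<otimes>\<^bsub>H\<^esub> (i c \<otimes>\<^bsub>H\<^esub> i d)"
    using assms by (simp add: H.m_assoc)
  finally show ?thesis using assms by simp
qed

lemma comm_pair_eq:
  assumes "x \<in> carrier H" "y \<in> carrier H"
  shows "comm_pair C H i p (p x) (p y) \<in> carrier C \<and>
    i (comm_pair C H i p (p x) (p y)) \<otimes>\<^bsub>H\<^esub> (y \<otimes>\<^bsub>H\<^esub> x) = x \<otimes>\<^bsub>H\<^esub> y"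
proof -
  define lx where "lx = lift H p (p x)"
  define ly where "ly = lift H p (p y)"
  have lx: "lx \<in> carrier H" "p lx = p x" using lift[of "p x"] assms lx_def by auto
  have ly: "ly \<in> carrier H" "p ly = p y" using lift[of "p y"] assms ly_def by auto
  obtain c where c: "c \<in> carrier C" "lx = i c \<otimes>\<^bsub>H\<^esub> x" using samefib[of x lx] lx assms by auto
  obtain d where d: "d \<in> carrier C" "ly = i d \<otimes>\<^bsub>H\<^esub> y" using samefib[of y ly] ly assms by auto
  obtain e where e: "e \<in> carrier C" "i e = lx \<otimes>\<^bsub>H\<^esub> ly \<otimes>\<^bsub>H\<^esub> inv\<^bsub>H\<^esub> lx \<otimes>\<^bsub>H\<^esub> inv\<^bsub>H\<^esub> ly"
    using comm_basic lx ly by blast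
  have cp: "comm_pair C H i p (p x) (p y) = e"
    unfolding comm_pair_def lx_def[symmetric] ly_def[symmetric] using e cpre_i by metis
  have 1: "i e \<otimes>\<^bsub>H\<^esub> (ly \<otimes>\<^bsub>H\<^esub> lx) = lx \<otimes>\<^bsub>H\<^esub> ly"
    unfolding e(2) using comm_cancel lx ly by simp
  have 2: "lx \<otimes>\<^bsub>H\<^esub> ly = x \<otimes>\<^bsub>H\<^esub> y \<otimes>\<^bsub>H\<^esub> i (c \<otimes>\<^bsub>C\<^esub> d)"
    using c d assms central_move by simp
  have 3: "ly \<otimes>\<^bsub>H\<^esub> lx = y \<otimes>\<^bsub>H\<^esub> x \<otimes>\<^bsub>H\<^esub> i (c \<otimes>\<^bsub>C\<^esub> d)"
    using c d assms central_move[of d c y x] C.m_comm[of c d] by simp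
  have "(i e \<otimes>\<^bsub>H\<^esub> (y \<otimes>\<^bsub>H\<^esub> x)) \<otimes>\<^bsub>H\<^esub> i (c \<otimes>\<^bsub>C\<^esub> d) = (x \<otimes>\<^bsub>H\<^esub> y) \<otimes>\<^bsub>H\<^esub> i (c \<otimes>\<^bsub>C\<^esub> d)"
    using 1 2 3 e c d assms by (simp add: H.m_assoc)
  then have "i e \<otimes>\<^bsub>H\<^esub> (y \<otimes>\<^bsub>H\<^esub> x) = x \<otimes>\<^bsub>H\<^esub> y"
    using e c d assms by (simp del: iH.hom_mult)
  then show ?thesis using cp e by simp
qed

lemma sym_facts:
  assumes "sym_struct A C H i p \<sigma>"
  shows "group_hom H H \<sigma>" "\<And>h. h \<in> carrier H \<Longrightarrow> \<sigma> h \<in> carrier H"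
    "\<And>c. c \<in> carrier C \<Longrightarrow> \<sigma> (i c) = i c"
    "\<And>h. h \<in> carrier H \<Longrightarrow> p (\<sigma> h) = inv\<^bsub>A\<^esub> (p h)"
    "\<And>h. h \<in> carrier H \<Longrightarrow> \<sigma> (\<sigma> h) = h"
    "\<sigma> \<in> extensional (carrier H)"
  using assms unfolding sym_struct_def group_hom_def group_hom_axioms_def
  by (auto intro: H.is_group simp: hom_def)

lemma sec_at:
  assumes sy: "sym_struct A C H i p \<sigma>" and h: "h \<in> carrier H"
  shows "sec_of_sym A C H i p \<sigma> (p h) = cls (inv\<^bsub>H\<^esub> (\<sigma> h)) h"
proof -
  interpret sg: group_hom H H \<sigma> by (rule sym_facts(1)[OF sy])
  note sf = sym_facts[OF sy]
  define l where "l = lift H p (p h)"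
  have l: "l \<in> carrier H" "p l = p h" using lift[of "p h"] h l_def by auto
  have "p (l \<otimes>\<^bsub>H\<^esub> \<sigma> l) = \<one>\<^bsub>A\<^esub>" using l sf h pH.hom_closed[OF h] by simp
  then obtain k where k: "k \<in> carrier C" "l \<otimes>\<^bsub>H\<^esub> \<sigma> l = i k" using ker l sf by (metis H.m_closed)
  have "sec_of_sym A C H i p \<sigma> (p h) =
      baer_emb C H i p (inv\<^bsub>C\<^esub> k) \<otimes>\<^bsub>B\<^esub> baer_map C H i p l"
    using h k cpre_i by (simp add: sec_of_sym_def flip: l_def)
  also have "\<dots> = cls (i (inv\<^bsub>C\<^esub> k) \<otimes>\<^bsub>H\<^esub> l) l" using k l by (simp add: emb_map)
  also have "i (inv\<^bsub>C\<^esub> k) \<otimes>\<^bsub>H\<^esub> l = inv\<^bsub>H\<^esub> (\<sigma> l)"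
  proof -
    have "i (inv\<^bsub>C\<^esub> k) = inv\<^bsub>H\<^esub> (\<sigma> l) \<otimes>\<^bsub>H\<^esub> inv\<^bsub>H\<^esub> l"
      using k l sf by (simp flip: k(2) add: H.inv_mult_group)
    then show ?thesis using l sf by (simp add: H.m_assoc)
  qed
  finally have 1: "sec_of_sym A C H i p \<sigma> (p h) = cls (inv\<^bsub>H\<^esub> (\<sigma> l)) l" .
  obtain c where c: "c \<in> carrier C" "l = i c \<otimes>\<^bsub>H\<^esub> h" using samefib[of h l] l h by auto
  note 1
  also note c(2)
  also have "inv\<^bsub>H\<^esub> (\<sigma> (i c \<otimes>\<^bsub>H\<^esub> h)) = i (inv\<^bsub>C\<^esub> c) \<otimes>\<^bsub>H\<^esub> inv\<^bsub>H\<^esub> (\<sigma> h)"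
    using c h sf central_inv[of c "inv\<^bsub>H\<^esub> (\<sigma> h)"] by (simp add: H.inv_mult_group)
  also have "i c \<otimes>\<^bsub>H\<^esub> h = inv\<^bsub>H\<^esub> (i (inv\<^bsub>C\<^esub> c)) \<otimes>\<^bsub>H\<^esub> h" using c by simp
  also have "cls (i (inv\<^bsub>C\<^esub> c) \<otimes>\<^bsub>H\<^esub> inv\<^bsub>H\<^esub> (\<sigma> h)) (inv\<^bsub>H\<^esub> (i (inv\<^bsub>C\<^esub> c)) \<otimes>\<^bsub>H\<^esub> h)
     = cls (inv\<^bsub>H\<^esub> (\<sigma> h)) h"
    using c h sf by (intro cls_eq) auto
  finally show ?thesis .
qed

lemma sec_good:
  assumes sy: "sym_struct A C H i p \<sigma>"
  shows "good_section A C H i p (sec_of_sym A C H i p \<sigma>)"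
proof -
  interpret sg: group_hom H H \<sigma> by (rule sym_facts(1)[OF sy])
  note sf = sym_facts[OF sy]
  let ?s = "sec_of_sym A C H i p \<sigma>"
  have ext: "?s \<in> extensional (carrier A)" unfolding sec_of_sym_def by simp
  have car: "?s a \<in> carrier B \<and> baer_proj p (?s a) = a" if a: "a \<in> carrier A" for a
  proof -
    obtain h where h: "h \<in> carrier H" "p h = a" using lift[OF a] by blast
    show ?thesis unfolding h(2)[symmetric] sec_at[OF sy h(1)] using h sf pH.hom_closed[OF h(1)]
      by (simp add: cls_carrier cls_proj)
  qed
  have mul: "?s a \<otimes>\<^bsub>B\<^esub> ?s b =
        ?s (a \<otimes>\<^bsub>A\<^esub> b) \<otimes>\<^bsub>B\<^esub> baer_emb C H i p (comm_pair C H i p a b)"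
    if a: "a \<in> carrier A" and b: "b \<in> carrier A" for a b
  proof -
    obtain h where h: "h \<in> carrier H" "p h = a" using lift[OF a] by blast
    obtain k where k: "k \<in> carrier H" "p k = b" using lift[OF b] by blast
    define U where "U = inv\<^bsub>H\<^esub> (\<sigma> h)"
    define V where "V = inv\<^bsub>H\<^esub> (\<sigma> k)"
    have UV: "U \<in> carrier H" "V \<in> carrier H" "p U = a" "p V = b"
      using h k sf unfolding U_def V_def by auto
    have cp: "comm_pair C H i p a b \<in> carrier C"
      "i (comm_pair C H i p a b) \<otimes>\<^bsub>H\<^esub> (V \<otimes>\<^bsub>H\<^esub> U) = U \<otimes>\<^bsub>H\<^esub> V"
      using comm_pair_eq[of U V] UV by auto
    have ab: "a \<otimes>\<^bsub>A\<^esub> b = p (h \<otimes>\<^bsub>H\<^esub> k)" using h k by simp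
    have s_hk: "inv\<^bsub>H\<^esub> (\<sigma> (h \<otimes>\<^bsub>H\<^esub> k)) = V \<otimes>\<^bsub>H\<^esub> U"
      unfolding U_def V_def using h k sf by (simp add: H.inv_mult_group)
    have "?s a \<otimes>\<^bsub>B\<^esub> ?s b = cls (U \<otimes>\<^bsub>H\<^esub> V) (h \<otimes>\<^bsub>H\<^esub> k)"
      unfolding h(2)[symmetric] k(2)[symmetric] sec_at[OF sy h(1)] sec_at[OF sy k(1)]
        U_def[symmetric] V_def[symmetric] using UV h k by (simp add: cls_mult)
    also have "U \<otimes>\<^bsub>H\<^esub> V = (V \<otimes>\<^bsub>H\<^esub> U) \<otimes>\<^bsub>H\<^esub> i (comm_pair C H i p a b)"
      using cp UV central[of "comm_pair C H i p a b" "V \<otimes>\<^bsub>H\<^esub> U"] by (metis H.m_closed)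
    also have "cls ((V \<otimes>\<^bsub>H\<^esub> U) \<otimes>\<^bsub>H\<^esub> i (comm_pair C H i p a b)) (h \<otimes>\<^bsub>H\<^esub> k) =
       cls (V \<otimes>\<^bsub>H\<^esub> U) (h \<otimes>\<^bsub>H\<^esub> k) \<otimes>\<^bsub>B\<^esub> cls (i (comm_pair C H i p a b)) \<one>\<^bsub>H\<^esub>"
      using cp UV h k A.m_comm[of "p V" "p U"] by (subst cls_mult) (auto simp: p_i)
    also have "cls (V \<otimes>\<^bsub>H\<^esub> U) (h \<otimes>\<^bsub>H\<^esub> k) = ?s (a \<otimes>\<^bsub>A\<^esub> b)"
      unfolding ab sec_at[OF sy H.m_closed[OF h(1) k(1)]] s_hk ..
    finally show ?thesis by (simp add: baer_emb_def)
  qed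
  show ?thesis unfolding good_section_def using ext car mul by blast
qed

lemma sec_inj: "inj_on (sec_of_sym A C H i p) {\<sigma>. sym_struct A C H i p \<sigma>}"
proof (rule inj_onI)
  fix \<sigma> \<tau> assume s: "\<sigma> \<in> {\<sigma>. sym_struct A C H i p \<sigma>}" "\<tau> \<in> {\<sigma>. sym_struct A C H i p \<sigma>}"
    and eq: "sec_of_sym A C H i p \<sigma> = sec_of_sym A C H i p \<tau>"
  have ss: "sym_struct A C H i p \<sigma>" "sym_struct A C H i p \<tau>" using s by auto
  show "\<sigma> = \<tau>"
  proof (rule extensionalityI[OF sym_facts(6)[OF ss(1)] sym_facts(6)[OF ss(2)]])
    fix h assume h: "h \<in> carrier H"
    have "cls (inv\<^bsub>H\<^esub> (\<sigma> h)) h = cls (inv\<^bsub>H\<^esub> (\<tau> h)) h"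
      using sec_at[OF ss(1) h] sec_at[OF ss(2) h] eq by simp
    then have "inv\<^bsub>H\<^esub> (\<sigma> h) = inv\<^bsub>H\<^esub> (\<tau> h)"
      using h sym_facts[OF ss(1)] sym_facts[OF ss(2)] by (intro cls_uniq) auto
    then show "\<sigma> h = \<tau> h" using h sym_facts[OF ss(1)] sym_facts[OF ss(2)]
      by (metis H.inv_inv)
  qed
qed

lemma good_facts:
  assumes "good_section A C H i p s"
  shows "s \<in> extensional (carrier A)"
    "\<And>a. a \<in> carrier A \<Longrightarrow> s a \<in> carrier B"
    "\<And>a. a \<in> carrier A \<Longrightarrow> baer_proj p (s a) = a"
    "\<And>a b. a \<in> carrier A \<Longrightarrow> b \<in> carrier A \<Longrightarrow> s a \<otimes>\<^bsub>B\<^esub> s b =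
        s (a \<otimes>\<^bsub>A\<^esub> b) \<otimes>\<^bsub>B\<^esub> baer_emb C H i p (comm_pair C H i p a b)"
  using assms unfolding good_section_def by auto

lemma good_ex:
  assumes g: "good_section A C H i p s" and h: "h \<in> carrier H"
  shows "\<exists>!u. u \<in> carrier H \<and> p u = p h \<and> s (p h) = cls u h"
proof -
  note gf = good_facts[OF g]
  obtain x y where xy: "x \<in> carrier H" "y \<in> carrier H" "p x = p y" "s (p h) = cls x y"
    using gf(2)[of "p h"] h by (auto elim: B_carrierE)
  have "p x = p h" using gf(3)[of "p h"] h xy cls_proj by simp
  then obtain c where c: "c \<in> carrier C" "y = i c \<otimes>\<^bsub>H\<^esub> h" using samefib[of h y] xy h by auto
  define u where "u = i c \<otimes>\<^bsub>H\<^esub> x"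
  have u: "u \<in> carrier H" "p u = p h" using c xy \<open>p x = p h\<close> by (auto simp: u_def p_i)
  have "cls (i (inv\<^bsub>C\<^esub> c) \<otimes>\<^bsub>H\<^esub> u) (inv\<^bsub>H\<^esub> (i (inv\<^bsub>C\<^esub> c)) \<otimes>\<^bsub>H\<^esub> h) = cls u h"
    using u h c by (intro cls_eq) auto
  moreover have "i (inv\<^bsub>C\<^esub> c) \<otimes>\<^bsub>H\<^esub> u = x" using c xy
    by (simp add: u_def H.m_assoc[symmetric])
  moreover have "inv\<^bsub>H\<^esub> (i (inv\<^bsub>C\<^esub> c)) \<otimes>\<^bsub>H\<^esub> h = y" using c h by simp
  ultimately have "s (p h) = cls u h" using xy by simp
  then show ?thesis using u h
    by (intro ex1I[of _ u]) (auto intro: cls_uniq)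
qed

definition tau where "tau s h = (THE u. u \<in> carrier H \<and> p u = p h \<and> s (p h) = cls u h)"

lemma tau:
  assumes g: "good_section A C H i p s" and h: "h \<in> carrier H"
  shows "tau s h \<in> carrier H" "p (tau s h) = p h" "s (p h) = cls (tau s h) h"
  using theI'[OF good_ex[OF g h]] unfolding tau_def by auto

lemma tau_uniq:
  assumes g: "good_section A C H i p s" and h: "h \<in> carrier H"
    and u: "u \<in> carrier H" "p u = p h" "s (p h) = cls u h"
  shows "tau s h = u"
  using tau[OF g h] u h by (intro cls_uniq[of _ _ h]) auto

lemma tau_mult:
  assumes g: "good_section A C H i p s" and h: "h \<in> carrier H" and k: "k \<in> carrier H"
  shows "tau s (h \<otimes>\<^bsub>H\<^esub> k) = tau s k \<otimes>\<^bsub>H\<^esub> tau s h"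
proof -
  note gf = good_facts[OF g]
  note th = tau[OF g h] and tk = tau[OF g k] and thk = tau[OF g H.m_closed[OF h k]]
  define e where "e = comm_pair C H i p (p h) (p k)"
  have e: "e \<in> carrier C" "i e \<otimes>\<^bsub>H\<^esub> (tau s k \<otimes>\<^bsub>H\<^esub> tau s h) = tau s h \<otimes>\<^bsub>H\<^esub> tau s k"
    using comm_pair_eq[of "tau s h" "tau s k"] th tk unfolding e_def by auto
  have "cls (tau s h \<otimes>\<^bsub>H\<^esub> tau s k) (h \<otimes>\<^bsub>H\<^esub> k) = s (p h) \<otimes>\<^bsub>B\<^esub> s (p k)"
    using th tk h k by (simp add: cls_mult)
  also have "\<dots> = s (p (h \<otimes>\<^bsub>H\<^esub> k)) \<otimes>\<^bsub>B\<^esub> baer_emb C H i p e"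
    using gf(4)[of "p h" "p k"] h k unfolding e_def by simp
  also have "\<dots> = cls (tau s (h \<otimes>\<^bsub>H\<^esub> k) \<otimes>\<^bsub>H\<^esub> i e) (h \<otimes>\<^bsub>H\<^esub> k)"
    unfolding thk(3) baer_emb_def using thk e h k by (subst cls_mult) (auto simp: p_i)
  finally have "tau s (h \<otimes>\<^bsub>H\<^esub> k) \<otimes>\<^bsub>H\<^esub> i e = tau s h \<otimes>\<^bsub>H\<^esub> tau s k"
    using th tk thk e h k by (intro cls_uniq[of _ _ "h \<otimes>\<^bsub>H\<^esub> k"]) (auto simp: p_i)
  also have "\<dots> = (tau s k \<otimes>\<^bsub>H\<^esub> tau s h) \<otimes>\<^bsub>H\<^esub> i e"
    using e(2)[symmetric] central[of e "tau s k \<otimes>\<^bsub>H\<^esub> tau s h"] e th tk by simp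
  finally show ?thesis using th tk thk e by (simp del: iH.hom_mult)
qed

lemma tau_one:
  assumes g: "good_section A C H i p s"
  shows "tau s \<one>\<^bsub>H\<^esub> = \<one>\<^bsub>H\<^esub>"
proof -
  have "tau s \<one>\<^bsub>H\<^esub> = tau s \<one>\<^bsub>H\<^esub> \<otimes>\<^bsub>H\<^esub> tau s \<one>\<^bsub>H\<^esub>"
    using tau_mult[OF g, of "\<one>\<^bsub>H\<^esub>" "\<one>\<^bsub>H\<^esub>"] by simp
  then show ?thesis using tau[OF g H.one_closed] by simp
qed

lemma tau_inv:
  assumes g: "good_section A C H i p s" and h: "h \<in> carrier H"
  shows "tau s (inv\<^bsub>H\<^esub> h) = inv\<^bsub>H\<^esub> (tau s h)"
proof -
  have "tau s (inv\<^bsub>H\<^esub> h) \<otimes>\<^bsub>H\<^esub> tau s h = \<one>\<^bsub>H\<^esub>"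
    using tau_mult[OF g h H.inv_closed[OF h]] tau_one[OF g] h by simp
  then show ?thesis using tau[OF g h] tau[OF g H.inv_closed[OF h]]
    by (metis H.inv_equality)
qed

lemma tau_tau:
  assumes g: "good_section A C H i p s" and h: "h \<in> carrier H"
  shows "tau s (tau s h) = h"
proof -
  note th = tau[OF g h]
  have "s (p (tau s h)) = cls h (tau s h)" using th h cls_swap by simp
  then show ?thesis using th h by (intro tau_uniq[OF g]) auto
qed

lemma tau_i:
  assumes g: "good_section A C H i p s" and c: "c \<in> carrier C"
  shows "tau s (i c) = inv\<^bsub>H\<^esub> (i c)"
proof (rule tau_uniq[OF g])
  have "s (p (i c)) = s (p \<one>\<^bsub>H\<^esub>)" using c by (simp add: p_i)
  also have "\<dots> = cls \<one>\<^bsub>H\<^esub> \<one>\<^bsub>H\<^esub>" using tau[OF g H.one_closed] tau_one[OF g] by simp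
  also have "\<dots> = cls (i (inv\<^bsub>C\<^esub> c) \<otimes>\<^bsub>H\<^esub> \<one>\<^bsub>H\<^esub>) (inv\<^bsub>H\<^esub> (i (inv\<^bsub>C\<^esub> c)) \<otimes>\<^bsub>H\<^esub> \<one>\<^bsub>H\<^esub>)"
    using c by (intro cls_eq[symmetric]) auto
  finally show "s (p (i c)) = cls (inv\<^bsub>H\<^esub> (i c)) (i c)" using c by simp
qed (use c in \<open>auto simp: p_i\<close>)

definition sig where "sig s = (\<lambda>h\<in>carrier H. inv\<^bsub>H\<^esub> (tau s h))"

lemma sig_sym:
  assumes g: "good_section A C H i p s"
  shows "sym_struct A C H i p (sig s)"
proof -
  have cl: "sig s h \<in> carrier H" if "h \<in> carrier H" for h
    using tau[OF g that] that by (simp add: sig_def)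
  have inv: "sig s (sig s h) = h" if h: "h \<in> carrier H" for h
    using h cl[OF h] tau[OF g h] tau_inv[OF g] tau_tau[OF g h] by (simp add: sig_def)
  have hom: "sig s \<in> hom H H"
    unfolding hom_def using cl tau_mult[OF g] tau[OF g]
    by (auto simp: sig_def H.inv_mult_group)
  have bij: "bij_betw (sig s) (carrier H) (carrier H)"
    by (rule bij_betw_byWitness[of _ "sig s"]) (use inv cl in auto)
  have ext: "sig s \<in> extensional (carrier H)" unfolding sig_def by simp
  have ic: "sig s (i c) = i c" if "c \<in> carrier C" for c
    using that tau_i[OF g that] by (simp add: sig_def)
  have pp: "p (sig s h) = inv\<^bsub>A\<^esub> p h" if "h \<in> carrier H" for h
    using that tau[OF g that] by (simp add: sig_def)
  show ?thesis unfolding sym_struct_def using hom bij ext inv ic pp by blast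
qed

lemma sig_sec:
  assumes g: "good_section A C H i p s"
  shows "sec_of_sym A C H i p (sig s) = s"
proof (rule extensionalityI[OF _ good_facts(1)[OF g]])
  show "sec_of_sym A C H i p (sig s) \<in> extensional (carrier A)"
    unfolding sec_of_sym_def by simp
next
  fix a assume a: "a \<in> carrier A"
  obtain h where h: "h \<in> carrier H" "p h = a" using lift[OF a] by blast
  show "sec_of_sym A C H i p (sig s) a = s a"
    unfolding h(2)[symmetric] sec_at[OF sig_sym[OF g] h(1)]
    using tau[OF g h(1)] h by (simp add: sig_def)
qed


end

theorem lemma1p2:
  fixes A :: "('a, 'x) monoid_scheme" and C :: "('c, 'y) monoid_scheme"
    and H :: "('h, 'z) monoid_scheme" and i :: "'c \<Rightarrow> 'h" and p :: "'h \<Rightarrow> 'a"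
  assumes "central_ext A C H i p"
  shows "bij_betw (sec_of_sym A C H i p)
           {\<sigma>. sym_struct A C H i p \<sigma>} {s. good_section A C H i p s}"
proof -
  interpret cext A C H i p by (unfold_locales) (rule assms)
  show ?thesis unfolding bij_betw_def
  proof (intro conjI)
    show "inj_on (sec_of_sym A C H i p) {\<sigma>. sym_struct A C H i p \<sigma>}" by (rule sec_inj)
    show "sec_of_sym A C H i p ` {\<sigma>. sym_struct A C H i p \<sigma>} = {s. good_section A C H i p s}"
    proof
      show "sec_of_sym A C H i p ` {\<sigma>. sym_struct A C H i p \<sigma>} \<subseteq> {s. good_section A C H i p s}"
        using sec_good by auto
      show "{s. good_section A C H i p s} \<subseteq> sec_of_sym A C H i p ` {\<sigma>. sym_struct A C H i p \<sigma>}"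
      proof
        fix s assume "s \<in> {s. good_section A C H i p s}"
        then have g: "good_section A C H i p s" by simp
        show "s \<in> sec_of_sym A C H i p ` {\<sigma>. sym_struct A C H i p \<sigma>}"
          using sig_sec[OF g] sig_sym[OF g] by (metis image_eqI mem_Collect_eq)
      qed
    qed
  qed
qed

end
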